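(* Let $p>3$ be prime, $t\in\{1,3,p,3p\}$, and $1\le r\le 3p-1$ with $\gcd(r,3p)=1$. Then \[\mathcal{S}(1,r,t)=\begin{cases}0 & \text{if } r\equiv1\pmod3,\\ |r|_p-1 & \text{if } r\equiv 2\pmod 3\text{ and } |r|_p\text{ is odd},\\ \frac{|r|_p}{2} & \text{if } r\equiv2\pmod 3\text{ and }|r|_p\text{ is even}.\end{cases}\]
   Context: $|r|_m$ is the multiplicative order of $r$ modulo $m$ (with $|r|_1=1$). $S_k(x):=1+x+\cdots+x^{k-1}$, $S_0:=0$. For $m\ge1$ with $\gcd(r,m)=1$, $\kappa(m,r,t):=\dfrac{m|r|_m}{\gcd(m,\,tS_{|r|_m}(r))}$. For $d\in\{1,3,p,3p\}$, $\Lambda(d,r,t):=\{\ell>0:\ \ell \text{ divides } \frac{|r|_{3p}}{\gcd(\kappa(d,r,t),|r|_{3p})}\text{ and }\gcd(r^{\ell\kappa(d,r,t)}-1,3p)=d\}$, and $\mathcal{S}(d,r,t):=\sum_{\ell\in\Lambda(d,r,t)} d\,\phi\!\left(\frac{|r|_{3p}}{\ell\gcd(\kappa(d,r,t),|r|_{3p})}\right)$, with $\phi$ Euler's function. *)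

theory Defs
  imports "HOL-Number_Theory.Number_Theory"
begin

(* |r|_m is  ord m r  (HOL-Number_Theory.Pocklington); note ord 1 r = 1. *)

definition Sgeom :: "nat \<Rightarrow> nat \<Rightarrow> nat" where
  "Sgeom k x = (\<Sum>i<k. x ^ i)"

definition kappa :: "nat \<Rightarrow> nat \<Rightarrow> nat \<Rightarrow> nat" where
  "kappa m r t = (m * ord m r) div gcd m (t * Sgeom (ord m r) r)"

definition Lam :: "nat \<Rightarrow> nat \<Rightarrow> nat \<Rightarrow> nat \<Rightarrow> nat set" where
  "Lam p d r t = {l. l > 0 \<and>
      l dvd (ord (3*p) r div gcd (kappa d r t) (ord (3*p) r)) \<and>
      gcd (r ^ (l * kappa d r t) - 1) (3*p) = d}"

definition SS :: "nat \<Rightarrow> nat \<Rightarrow> nat \<Rightarrow> nat \<Rightarrow> nat" where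
  "SS p d r t = (\<Sum>l\<in>Lam p d r t. d * totient (ord (3*p) r div (l * gcd (kappa d r t) (ord (3*p) r))))"

end

theory Submission
  imports Defs
begin

lemma sum_totient_filter:
  fixes n :: nat
  assumes "n > 0"
  shows "(\<Sum>l\<in>{l. l dvd n \<and> P l}. totient (n div l)) = card {k\<in>{0<..n}. P (gcd k n)}"
proof -
  define A where "A = (\<lambda>d. {k\<in>{0<..n}. gcd k n = d})"
  have *: "card (A d) = totient (n div d)" if d: "d dvd n" for d
    using \<open>n > 0\<close> and d unfolding A_def by (rule card_gcd_eq_totient)
  have "{k\<in>{0<..n}. P (gcd k n)} = (\<Union>d\<in>{l. l dvd n \<and> P l}. A d)"
    by (auto simp: A_def)
  also have "card \<dots> = (\<Sum>d\<in>{l. l dvd n \<and> P l}. card (A d))"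
    using \<open>n > 0\<close> by (intro card_UN_disjoint) (auto simp: A_def)
  also have "\<dots> = (\<Sum>d\<in>{l. l dvd n \<and> P l}. totient (n div d))"
    by (intro sum.cong refl *) auto
  finally show ?thesis by simp
qed

lemma card_odd: "card {j\<in>{0<..2*m}. odd (j::nat)} = m"
proof (induction m)
  case 0
  then show ?case by simp
next
  case (Suc m)
  have "{j\<in>{0<..2*Suc m}. odd (j::nat)} = insert (2*m+1) {j\<in>{0<..2*m}. odd j}"
    by (auto elim: oddE)
  then show ?case using Suc by simp
qed

lemma card_odd': "card {j. 0 < j \<and> j \<le> 2*m \<and> odd (j::nat)} = m"
  using card_odd[of m] by simp

lemma dvd_minus_one_iff:
  fixes r m g :: nat
  assumes "r \<ge> 1"
  shows "m dvd r ^ g - 1 \<longleftrightarrow> ord m r dvd g"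
proof -
  have "r ^ g \<ge> 1" using assms by simp
  then have "m dvd r ^ g - 1 \<longleftrightarrow> [r ^ g = 1] (mod m)"
    by (simp add: cong_altdef_nat)
  then show ?thesis by (simp add: ord_divides')
qed

lemma cop_prime:
  fixes q x :: nat
  assumes "prime q"
  shows "coprime x q \<longleftrightarrow> \<not> q dvd x"
proof
  assume "coprime x q" then show "\<not> q dvd x" using assms
    by (metis coprime_common_divisor_nat dvd_refl prime_gt_1_nat less_irrefl)
next
  assume "\<not> q dvd x" then show "coprime x q" using assms prime_imp_coprime[of q x]
    by (simp add: coprime_commute)
qed

lemma ord_prod:
  fixes a b r :: nat
  assumes "coprime a b"
  shows "ord (a*b) r = lcm (ord a r) (ord b r)"
proof -
  have key: "ord (a*b) r dvd m \<longleftrightarrow> lcm (ord a r) (ord b r) dvd m" for m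
  proof -
    have "ord (a*b) r dvd m \<longleftrightarrow> [r^m = 1] (mod a*b)" by (simp add: ord_divides')
    also have "\<dots> \<longleftrightarrow> [r^m = 1] (mod a) \<and> [r^m = 1] (mod b)"
      using assms coprime_cong_mult_nat cong_modulus_mult_nat
      by (metis mult.commute)
    also have "\<dots> \<longleftrightarrow> lcm (ord a r) (ord b r) dvd m" by (simp add: ord_divides')
    finally show ?thesis .
  qed
  show ?thesis using key[of "ord (a*b) r"] key[of "lcm (ord a r) (ord b r)"]
    by (simp add: dvd_antisym)
qed

theorem lemma5p8:
  fixes p r t :: nat
  assumes "prime p" and "p > 3"
    and "t \<in> {1, 3, p, 3*p}"
    and "1 \<le> r" and "r \<le> 3*p - 1" and "coprime r (3*p)"
  shows "SS p 1 r t =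
          (if r mod 3 = 1 then 0
           else if odd (ord p r) then ord p r - 1
           else ord p r div 2)"
proof -
  define n where "n = ord (3*p) r"
  define k where "k = ord p r"
  have cop3p: "coprime 3 p" using assms(1,2)
    by (intro primes_coprime) auto
  have npos: "n > 0" using assms(6) unfolding n_def by (simp add: coprime_commute)
  have r3: "coprime r 3" and rp: "coprime r p" using assms(6) by auto
  have kpos: "k > 0" using rp unfolding k_def by (simp add: coprime_commute)
  have kap: "kappa 1 r t = 1" by (simp add: kappa_def)
  have Lam: "Lam p 1 r t = {l. l dvd n \<and> gcd (r^l - 1) (3*p) = 1}"
    using npos unfolding Lam_def kap n_def[symmetric] by (auto intro: Nat.gr0I)
  have SS: "SS p 1 r t = card {j\<in>{0<..n}. gcd (r^(gcd j n) - 1) (3*p) = 1}"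
    unfolding SS_def kap Lam n_def[symmetric] using sum_totient_filter[OF npos] by simp
  have g: "gcd x (3*p) = 1 \<longleftrightarrow> \<not> 3 dvd x \<and> \<not> p dvd x" for x
  proof -
    have "gcd x (3*p) = 1 \<longleftrightarrow> coprime x 3 \<and> coprime x p"
      by (metis coprime_iff_gcd_eq_1 coprime_mult_right_iff)
    also have "\<dots> \<longleftrightarrow> \<not> 3 dvd x \<and> \<not> p dvd x"
      using assms(1) by (simp add: cop_prime)
    finally show ?thesis .
  qed
  have cond: "gcd (r^g - 1) (3*p) = 1 \<longleftrightarrow> \<not> ord 3 r dvd g \<and> \<not> k dvd g" for g
    unfolding g k_def using dvd_minus_one_iff[OF assms(4)] by simp
  have nlcm: "n = lcm (ord 3 r) k" unfolding n_def k_def by (rule ord_prod[OF cop3p])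
  show ?thesis
  proof (cases "r mod 3 = 1")
    case True
    have "[r = 1] (mod 3)" using True by (simp add: cong_def)
    then have "ord 3 r = 1" using ord_eq_Suc_0_iff[of 3 r] by simp
    then show ?thesis using True unfolding SS cond by simp
  next
    case False
    have "r mod 3 \<noteq> 0" using r3
      using cop_prime[of 3 r] r3 by (auto simp: dvd_eq_mod_eq_0)
    then have r2: "r mod 3 = 2" using False by arith
    have o3: "ord 3 r = 2"
      using r2 unfolding ord_eq_2_iff by (simp add: cong_def power2_eq_square mod_mult_eq[symmetric])
    have set: "{j\<in>{0<..n}. gcd (r^(gcd j n) - 1) (3*p) = 1} = {j\<in>{0<..n}. odd j \<and> \<not> k dvd j}"
    proof -
      have "even n" using nlcm o3 by simp
      have "k dvd n" using nlcm by simp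
      show ?thesis unfolding cond o3 using \<open>even n\<close> \<open>k dvd n\<close>
        by auto
    qed
    show ?thesis
    proof (cases "odd k")
      case True
      have n2: "n = 2*k" using nlcm o3 True
        by (simp add: lcm_nat_def coprime_commute)
      have "{j\<in>{0<..n}. odd j \<and> \<not> k dvd j} = {j\<in>{0<..2*k}. odd j} - {k}"
      proof -
        have "j \<in> {0<..2*k} \<Longrightarrow> odd j \<Longrightarrow> k dvd j \<Longrightarrow> j = k" for j
        proof -
          assume a: "j \<in> {0<..2*k}" "odd j" "k dvd j"
          then obtain c where c: "j = k*c" by auto
          have "c \<noteq> 0" using a c by auto
          moreover have "c \<le> 2" using a c kpos by auto
          moreover have "c \<noteq> 2" using a c by auto
          ultimately have "c = 1" by arith
          then show "j = k" using c by simp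
        qed
        then show ?thesis unfolding n2 using True by auto
      qed
      moreover have "k \<in> {j\<in>{0<..2*k}. odd j}" using True kpos by auto
      ultimately show ?thesis using False True unfolding SS set k_def[symmetric]
        by (simp add: card_odd')
    next
      case False2: False
      have n2: "n = k" using nlcm o3 False2
        by (simp add: lcm_nat_def dvd_div_mult_self)
      obtain m where m: "k = 2*m" using False2 by auto
      have "{j\<in>{0<..n}. odd j \<and> \<not> k dvd j} = {j\<in>{0<..2*m}. odd j}"
        unfolding n2 using m by auto
      then show ?thesis using False False2 m unfolding SS set k_def[symmetric]
        by (simp add: card_odd')
    qed
  qed
qed

end
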